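(* Let $Q_4$ be the edge graph of the $4$-dimensional hypercube (vertices $\{0,1\}^4$, two vertices adjacent iff they differ in exactly one coordinate). Up to a permutation of the colours (simultaneous permutation of rows and columns of the colour adjacency matrix), the colour adjacency matrices of perfect $2$-colourings of $Q_4$ are exactly the five matrices \[ \begin{pmatrix} 0 & 4 \\ 4 & 0 \end{pmatrix}, \begin{pmatrix} 1 & 3 \\ 1 & 3 \end{pmatrix}, \begin{pmatrix} 1 & 3 \\ 3 & 1 \end{pmatrix}, \begin{pmatrix} 2 & 2 \\ 2 & 2 \end{pmatrix}, \begin{pmatrix} 3 & 1 \\ 1 & 3 \end{pmatrix}, \] and the colour adjacency matrices of perfect $3$-colourings of $Q_4$ are exactly the five matrices \[ \begin{pmatrix} 0 & 0 & 4 \\ 0 & 0 & 4 \\ 1 & 3 & 0 \end{pmatrix}, \begin{pmatrix} 0 & 0 & 4 \\ 0 & 0 & 4 \\ 2 & 2 & 0 \end{pmatrix}, \begin{pmatrix} 0 & 2 & 2 \\ 2 & 0 & 2 \\ 1 & 1 & 2 \end{pmatrix}, \begin{pmatrix} 1 & 1 & 2 \\ 1 & 1 & 2 \\ 1 & 1 & 2 \end{pmatrix}, \begin{pmatrix} 2 & 0 & 2 \\ 0 & 2 & 2 \\ 1 & 1 & 2 \end{pmatrix}. \] In particular each of these matrices is realized by some perfect colouring of $Q_4$.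
   Context: An $m$-colouring of a graph $G=(V,E)$ is a partition of $V$ into $m$ disjoint nonempty sets $V_1,\dots,V_m$ (the colours; adjacent vertices may have the same colour). It is perfect if for all $i,j$ every vertex of colour $i$ has the same number $a_{ij}$ of neighbours of colour $j$; the matrix $A=(a_{ij})$ is its colour adjacency matrix. Relabelling colours by a permutation $\sigma$ replaces $A$ by $(a_{\sigma(i)\sigma(j)})$. *)

theory Defs
  imports Main "HOL-Combinatorics.Permutations"
begin

definition Q4_V :: "bool list set" where
  "Q4_V = {v. length v = 4}"

definition Q4_adj :: "bool list \<Rightarrow> bool list \<Rightarrow> bool" where
  "Q4_adj u v \<longleftrightarrow> card {i. i < 4 \<and> u ! i \<noteq> v ! i} = 1"

text \<open>An m-colouring of (V,E) is given by a colour map c : V -> {0..<m} that is onto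
  (so the colour classes V_i = c^-1(i) form a partition of V into m nonempty sets).\<close>

definition is_colouring :: "'v set \<Rightarrow> nat \<Rightarrow> ('v \<Rightarrow> nat) \<Rightarrow> bool" where
  "is_colouring V m c \<longleftrightarrow> c ` V = {..<m}"

definition perfect_colouring ::
  "'v set \<Rightarrow> ('v \<Rightarrow> 'v \<Rightarrow> bool) \<Rightarrow> nat \<Rightarrow> ('v \<Rightarrow> nat) \<Rightarrow> (nat \<Rightarrow> nat \<Rightarrow> nat) \<Rightarrow> bool" where
  "perfect_colouring V E m c A \<longleftrightarrow> is_colouring V m c \<and>
     (\<forall>i<m. \<forall>j<m. \<forall>v\<in>V. c v = i \<longrightarrow> card {w\<in>V. E v w \<and> c w = j} = A i j)"

definition mat_of :: "nat list list \<Rightarrow> nat \<Rightarrow> nat \<Rightarrow> nat" where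
  "mat_of rows i j = rows ! i ! j"

definition equiv_up_to_perm :: "nat \<Rightarrow> (nat \<Rightarrow> nat \<Rightarrow> nat) \<Rightarrow> (nat \<Rightarrow> nat \<Rightarrow> nat) \<Rightarrow> bool" where
  "equiv_up_to_perm m A M \<longleftrightarrow>
     (\<exists>\<sigma>. \<sigma> permutes {..<m} \<and> (\<forall>i<m. \<forall>j<m. A (\<sigma> i) (\<sigma> j) = M i j))"

end

theory Submission
  imports Defs
begin

definition vs :: "bool list list" where
 "vs = [[False,False,False,False],[True,False,False,False],[False,True,False,False],[True,True,False,False],
 [False,False,True,False],[True,False,True,False],[False,True,True,False],[True,True,True,False],
 [False,False,False,True],[True,False,False,True],[False,True,False,True],[True,True,False,True],
 [False,False,True,True],[True,False,True,True],[False,True,True,True],[True,True,True,True]]"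

lemma distinct_vs: "distinct vs" by (simp add: vs_def)

lemma len4: "length v = 4 \<longleftrightarrow> (\<exists>a b c d. v = [a,b,c,d])"
  by (auto simp: numeral_eq_Suc length_Suc_conv)

lemma V_eq: "Q4_V = set vs"
proof
  show "Q4_V \<subseteq> set vs"
  proof
    fix v assume "v \<in> Q4_V"
    then obtain a b c d where "v = [a,b,c,d]" by (auto simp: Q4_V_def len4)
    then show "v \<in> set vs" by (cases a; cases b; cases c; cases d) (simp_all add: vs_def)
  qed
  show "set vs \<subseteq> Q4_V" by (auto simp: vs_def Q4_V_def)
qed

lemma card_lt4: "card {i::nat. i < 4 \<and> P i} = (of_bool (P 0) + of_bool (P 1) + of_bool (P 2) + of_bool (P 3) :: nat)"
proof -
  have "{i::nat. i < 4 \<and> P i} = {..<4} \<inter> {i. P i}" by auto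
  then have "card {i::nat. i < 4 \<and> P i} = (\<Sum>i<4. of_bool (P i))" by (simp add: sum_of_bool_eq)
  then show ?thesis by (simp add: numeral_eq_Suc)
qed

lemma adj4: "Q4_adj [a,b,c,d] [e,f,g,h] \<longleftrightarrow>
   (of_bool (a\<noteq>e) + of_bool (b\<noteq>f) + of_bool (c\<noteq>g) + of_bool (d\<noteq>h) :: nat) = 1"
  unfolding Q4_adj_def card_lt4 by (simp add: numeral_eq_Suc)

lemma G3: "\<forall>v\<in>set vs. \<forall>u\<in>set vs. even (length (filter (\<lambda>w. Q4_adj v w \<and> Q4_adj w u) vs))"
  by (simp add: vs_def adj4)

lemma card_filter_set: "distinct xs \<Longrightarrow> card {w\<in>set xs. P w} = length (filter P xs)"
  by (metis distinct_card distinct_filter set_filter)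

lemma G1: "v \<in> Q4_V \<Longrightarrow> card {w\<in>Q4_V. Q4_adj v w} = 4"
proof -
  have "\<forall>v\<in>set vs. length (filter (Q4_adj v) vs) = 4" by (simp add: vs_def adj4)
  moreover assume "v \<in> Q4_V"
  ultimately show ?thesis by (simp add: V_eq card_filter_set[OF distinct_vs])
qed

lemma G2: "Q4_adj u v = Q4_adj v u"
proof -
  have "{i. i < 4 \<and> u!i \<noteq> v!i} = {i. i < 4 \<and> v!i \<noteq> u!i}" by auto
  then show ?thesis by (simp add: Q4_adj_def)
qed

lemma G3': "u \<in> Q4_V \<Longrightarrow> v \<in> Q4_V \<Longrightarrow> even (card {w\<in>Q4_V. Q4_adj v w \<and> Q4_adj w u})"
  using G3 by (simp add: V_eq card_filter_set[OF distinct_vs])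

lemma card_V: "card Q4_V = 16"
  by (simp add: V_eq distinct_card[OF distinct_vs]) (simp add: vs_def)

lemma finV: "finite Q4_V" by (simp add: V_eq)

lemma flip_adj: assumes "u \<in> Q4_V" "k < 4" shows "Q4_adj u (u[k := \<not> u!k])"
proof -
  have "{i. i < 4 \<and> u ! i \<noteq> u[k := \<not> u!k] ! i} = {k}"
    using assms by (auto simp: Q4_V_def nth_list_update)
  then show ?thesis unfolding Q4_adj_def by simp
qed

lemma step_closed:
  assumes U: "\<forall>u\<in>U. \<forall>w\<in>Q4_V. Q4_adj u w \<longrightarrow> w \<in> U" and "U \<subseteq> Q4_V"
    and u: "u \<in> U" and k: "k < 4"
  shows "u[k := b] \<in> U"
proof (cases "b = u!k")
  case True then show ?thesis using u by simp
next
  case False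
  then have "b = (\<not> u!k)" by blast
  moreover have "u \<in> Q4_V" using u assms by blast
  moreover have "u[k := \<not> u!k] \<in> Q4_V" using \<open>u \<in> Q4_V\<close> by (simp add: Q4_V_def)
  ultimately show ?thesis using flip_adj[of u k] k U u by blast
qed

lemma G4:
  assumes U: "\<forall>u\<in>U. \<forall>w\<in>Q4_V. Q4_adj u w \<longrightarrow> w \<in> U" and sub: "U \<subseteq> Q4_V"
    and x: "x \<in> U" and y: "y \<in> Q4_V"
  shows "y \<in> U"
proof -
  have "x[0 := y!0, 1 := y!1, 2 := y!2, 3 := y!3] \<in> U"
    by (intro step_closed[OF U sub]; simp add: x)
  moreover have "x[0 := y!0, 1 := y!1, 2 := y!2, 3 := y!3] = y"
  proof -
    obtain a b c d where "x = [a,b,c,d]" using x sub by (auto simp: Q4_V_def len4)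
    moreover obtain e f g h where "y = [e,f,g,h]" using y by (auto simp: Q4_V_def len4)
    ultimately show ?thesis by simp
  qed
  ultimately show ?thesis by simp
qed

lemma card_as_sum: "finite V \<Longrightarrow> card {w\<in>V. P w} = (\<Sum>w\<in>V. of_bool (P w) :: nat)"
proof -
  assume "finite V"
  moreover have "{w\<in>V. P w} = V \<inter> {w. P w}" by auto
  ultimately show ?thesis by simp
qed

context
  fixes m c A
  assumes pc: "perfect_colouring Q4_V Q4_adj m c A"
begin

lemma c_img: "c ` Q4_V = {..<m}"
  using pc by (simp add: perfect_colouring_def is_colouring_def)

lemma c_lt: "v \<in> Q4_V \<Longrightarrow> c v < m"
  using c_img by blast

lemma c_ex: "i < m \<Longrightarrow> \<exists>v\<in>Q4_V. c v = i"
  using c_img by (metis imageE lessThan_iff)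

lemma c_A: "v \<in> Q4_V \<Longrightarrow> j < m \<Longrightarrow> card {w\<in>Q4_V. Q4_adj v w \<and> c w = j} = A (c v) j"
  using pc c_lt unfolding perfect_colouring_def by blast

lemma group_card:
  assumes "finite S" "c ` S \<subseteq> {..<m}"
  shows "(\<Sum>k<m. f k * card {x\<in>S. c x = k}) = (\<Sum>x\<in>S. f (c x))"
proof -
  have "(\<Sum>k<m. f k * card {x\<in>S. c x = k}) = (\<Sum>k<m. \<Sum>x\<in>{x\<in>S. c x = k}. f (c x))"
    by (intro sum.cong refl) simp
  also have "\<dots> = (\<Sum>x\<in>S. f (c x))"
    by (rule sum.group) (use assms in auto)
  finally show ?thesis .
qed

lemma rowsum: assumes "i < m" shows "(\<Sum>j<m. A i j) = 4"
proof -
  obtain v where v: "v \<in> Q4_V" "c v = i" using c_ex assms by blast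
  let ?N = "{w\<in>Q4_V. Q4_adj v w}"
  have fin: "finite ?N" using finV by simp
  have sub: "c ` ?N \<subseteq> {..<m}" using c_lt by auto
  have "(\<Sum>j<m. A i j) = (\<Sum>j<m. 1 * card {x\<in>?N. c x = j})"
    using v c_A by (intro sum.cong refl) (simp add: conj_assoc)
  also have "\<dots> = (\<Sum>x\<in>?N. 1)" using group_card[OF fin sub, of "\<lambda>_. 1"] by simp
  also have "\<dots> = 4" using G1[OF v(1)] by simp
  finally show ?thesis .
qed

definition ncl :: "nat \<Rightarrow> nat" where "ncl i = card {v\<in>Q4_V. c v = i}"

lemma sum_ncl: "(\<Sum>i<m. ncl i) = 16"
proof -
  have sub: "c ` Q4_V \<subseteq> {..<m}" using c_lt by auto
  have "(\<Sum>i<m. ncl i) = (\<Sum>i<m. 1 * card {x\<in>Q4_V. c x = i})" by (simp add: ncl_def)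
  also have "\<dots> = (\<Sum>x\<in>Q4_V. 1)" using group_card[OF finV sub, of "\<lambda>_. 1"] by simp
  also have "\<dots> = 16" using card_V by simp
  finally show ?thesis .
qed

lemma ncl_pos: assumes "i < m" shows "ncl i \<ge> 1"
proof -
  obtain v where "v \<in> Q4_V" "c v = i" using c_ex assms by blast
  then have "{v\<in>Q4_V. c v = i} \<noteq> {}" by auto
  then show ?thesis using finV by (simp add: ncl_def Suc_le_eq card_gt_0_iff)
qed

definition Scnt :: "nat \<Rightarrow> nat \<Rightarrow> nat" where
  "Scnt i j = (\<Sum>v\<in>Q4_V. \<Sum>w\<in>Q4_V. of_bool (c v = i \<and> Q4_adj v w \<and> c w = j))"

lemma Scnt_sym: "Scnt i j = Scnt j i"
  unfolding Scnt_def
  by (subst sum.swap) (intro sum.cong refl, auto simp: G2)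

lemma ncl_A: assumes "i < m" "j < m" shows "ncl i * A i j = Scnt i j"
proof -
  have "ncl i * A i j = (\<Sum>v\<in>{v\<in>Q4_V. c v = i}. A i j)" by (simp add: ncl_def)
  also have "\<dots> = (\<Sum>v\<in>{v\<in>Q4_V. c v = i}. card {w\<in>Q4_V. Q4_adj v w \<and> c w = j})"
    using c_A assms by (intro sum.cong refl) auto
  also have "\<dots> = (\<Sum>v\<in>Q4_V. if c v = i then card {w\<in>Q4_V. Q4_adj v w \<and> c w = j} else 0)"
    using finV by (simp add: sum.inter_filter)
  also have "\<dots> = Scnt i j"
    unfolding Scnt_def by (intro sum.cong refl) (auto simp: card_as_sum[OF finV])
  finally show ?thesis .
qed

lemma sizes_eq: "i < m \<Longrightarrow> j < m \<Longrightarrow> ncl i * A i j = ncl j * A j i"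
  using ncl_A Scnt_sym by metis

lemma parity: assumes "i < m" "j < m" shows "even (\<Sum>k<m. A i k * A k j)"
proof -
  obtain v where v: "v \<in> Q4_V" "c v = i" using c_ex assms by blast
  let ?N = "{w\<in>Q4_V. Q4_adj v w}"
  have fin: "finite ?N" using finV by simp
  have sub: "c ` ?N \<subseteq> {..<m}" using c_lt by auto
  have "(\<Sum>k<m. A i k * A k j) = (\<Sum>k<m. A k j * card {x\<in>?N. c x = k})"
    using v c_A by (intro sum.cong refl) (simp add: conj_assoc mult.commute)
  also have "\<dots> = (\<Sum>w\<in>?N. A (c w) j)" by (rule group_card[OF fin sub])
  also have "\<dots> = (\<Sum>w\<in>?N. \<Sum>u\<in>Q4_V. of_bool (Q4_adj w u \<and> c u = j))"
    using c_A assms(2) by (intro sum.cong refl) (auto simp: card_as_sum[OF finV, symmetric])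
  also have "\<dots> = (\<Sum>u\<in>Q4_V. \<Sum>w\<in>?N. of_bool (Q4_adj w u \<and> c u = j))"
    by (rule sum.swap)
  also have "\<dots> = (\<Sum>u\<in>Q4_V. if c u = j then card {w\<in>Q4_V. Q4_adj v w \<and> Q4_adj w u} else 0)"
  proof (intro sum.cong refl)
    fix u assume "u \<in> Q4_V"
    have "(\<Sum>w\<in>?N. of_bool (Q4_adj w u \<and> c u = j) :: nat) = card {w\<in>?N. Q4_adj w u \<and> c u = j}"
      by (rule card_as_sum[OF fin, symmetric])
    also have "\<dots> = (if c u = j then card {w\<in>Q4_V. Q4_adj v w \<and> Q4_adj w u} else 0)"
      by (auto intro: arg_cong[where f=card])
    finally show "(\<Sum>w\<in>?N. of_bool (Q4_adj w u \<and> c u = j)) = (if c u = j then card {w\<in>Q4_V. Q4_adj v w \<and> Q4_adj w u} else 0)" .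
  qed
  also have "even \<dots>"
    by (intro dvd_sum) (use G3' v(1) in auto)
  finally show ?thesis .
qed

lemma conn: assumes "T \<subseteq> {..<m}" "i \<in> T" "j < m" "j \<notin> T"
  shows "\<exists>a\<in>T. \<exists>b<m. b \<notin> T \<and> A a b \<noteq> 0"
proof (rule ccontr)
  assume H: "\<not> ?thesis"
  let ?U = "{v\<in>Q4_V. c v \<in> T}"
  have cl: "\<forall>u\<in>?U. \<forall>w\<in>Q4_V. Q4_adj u w \<longrightarrow> w \<in> ?U"
  proof (intro ballI impI)
    fix u w assume u: "u \<in> ?U" and w: "w \<in> Q4_V" and adj: "Q4_adj u w"
    show "w \<in> ?U"
    proof (rule ccontr)
      assume "w \<notin> ?U"
      then have "c w \<notin> T" using w by simp
      moreover have "c w < m" using c_lt w by simp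
      ultimately have "A (c u) (c w) = 0" using H u by auto
      moreover have "card {w'\<in>Q4_V. Q4_adj u w' \<and> c w' = c w} \<noteq> 0"
        using w adj finV by (auto simp: card_eq_0_iff)
      ultimately show False using c_A[of u "c w"] u \<open>c w < m\<close> by simp
    qed
  qed
  obtain x where x: "x \<in> Q4_V" "c x = i" using c_ex assms by blast
  obtain y where y: "y \<in> Q4_V" "c y = j" using c_ex assms by blast
  have "y \<in> ?U" by (rule G4[OF cl _ _ y(1), of x]) (use x assms in auto)
  then show False using y assms by simp
qed

end

definition ev_ok :: "nat \<Rightarrow> nat list list \<Rightarrow> bool" where
  "ev_ok m R = list_all (\<lambda>i. list_all (\<lambda>j. even (sum_list (map (\<lambda>k. R!i!k * R!k!j) [0..<m]))) [0..<m]) [0..<m]"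

definition conn_ok :: "nat \<Rightarrow> nat list list \<Rightarrow> nat list list \<Rightarrow> bool" where
  "conn_ok m Ts R = list_all (\<lambda>T. \<exists>a\<in>set T. \<exists>b\<in>set [0..<m]. b \<notin> set T \<and> R!a!b \<noteq> 0) Ts"

definition sizes_ok :: "nat \<Rightarrow> nat list list \<Rightarrow> nat list list \<Rightarrow> bool" where
  "sizes_ok m Ns R = (\<exists>n\<in>set Ns. list_all (\<lambda>i. list_all (\<lambda>j. n!i * R!i!j = n!j * R!j!i) [0..<m]) [0..<m])"

definition good :: "nat \<Rightarrow> nat list list \<Rightarrow> nat list list list \<Rightarrow> nat list list \<Rightarrow> bool" where
  "good m Ps Ms R = (\<exists>p\<in>set Ps. \<exists>M\<in>set Ms. list_all (\<lambda>i. list_all (\<lambda>j. R!(p!i)!(p!j) = M!i!j) [0..<m]) [0..<m])"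

definition check :: "nat \<Rightarrow> nat list list \<Rightarrow> nat list list \<Rightarrow> nat list list \<Rightarrow> nat list list list \<Rightarrow> nat list list \<Rightarrow> bool" where
  "check m Ts Ns Ps Ms R = (if ev_ok m R then (if conn_ok m Ts R then (if good m Ps Ms R then True else \<not> sizes_ok m Ns R) else True) else True)"

definition rows3 :: "nat list list" where
  "rows3 = filter (\<lambda>r. sum_list r = 4) (product_lists [[0..<5],[0..<5],[0..<5]])"
definition Ns3 :: "nat list list" where
  "Ns3 = [[a,b,16-a-b]. a \<leftarrow> [1..<15], b \<leftarrow> [1..<16-a], 16 - a - b \<ge> 1]"
definition Ts3 :: "nat list list" where "Ts3 = [[0],[1],[2],[0,1],[0,2],[1,2]]"
definition Ps3 :: "nat list list" where "Ps3 = [[0,1,2],[0,2,1],[1,0,2],[1,2,0],[2,0,1],[2,1,0]]"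
definition Ms3 :: "nat list list list" where
  "Ms3 = [[[0,0,4],[0,0,4],[1,3,0]], [[0,0,4],[0,0,4],[2,2,0]],
          [[0,2,2],[2,0,2],[1,1,2]], [[1,1,2],[1,1,2],[1,1,2]],
          [[2,0,2],[0,2,2],[1,1,2]]]"

lemma dec3: "list_all (\<lambda>r0. list_all (\<lambda>r1. list_all (\<lambda>r2. check 3 Ts3 Ns3 Ps3 Ms3 [r0,r1,r2]) rows3) rows3) rows3"
  by code_simp


definition rows2 :: "nat list list" where
  "rows2 = filter (\<lambda>r. sum_list r = 4) (product_lists [[0..<5],[0..<5]])"
definition Ns2 :: "nat list list" where
  "Ns2 = [[a,16-a]. a \<leftarrow> [1..<16]]"
definition Ts2 :: "nat list list" where "Ts2 = [[0],[1]]"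
definition Ps2 :: "nat list list" where "Ps2 = [[0,1],[1,0]]"
definition Ms2 :: "nat list list list" where
  "Ms2 = [[[0,4],[4,0]], [[1,3],[1,3]], [[1,3],[3,1]], [[2,2],[2,2]], [[3,1],[1,3]]]"

lemma dec2: "list_all (\<lambda>r0. list_all (\<lambda>r1. check 2 Ts2 Ns2 Ps2 Ms2 [r0,r1]) rows2) rows2"
  by code_simp

definition Rof :: "nat \<Rightarrow> (nat \<Rightarrow> nat \<Rightarrow> nat) \<Rightarrow> nat list list" where
  "Rof m A = map (\<lambda>i. map (A i) [0..<m]) [0..<m]"

lemma Rof_nth: "a < m \<Longrightarrow> b < m \<Longrightarrow> Rof m A ! a ! b = A a b"
  by (simp add: Rof_def)

lemma sum_list_upt_map: "sum_list (map f [0..<m]) = (\<Sum>k<m. f k)"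
  by (simp add: sum_set_upt_conv_sum_list_nat[symmetric] atLeast0LessThan)

lemma list_perm_permutes:
  assumes d: "distinct p" and s: "set p = {..<m}" and l: "length p = m"
  shows "(\<lambda>i. if i < m then p!i else i) permutes {..<m}"
proof (rule bij_imp_permutes)
  let ?s = "(\<lambda>i. if i < m then p!i else i)"
  have "inj_on ?s {..<m}"
    using d l by (auto simp: inj_on_def nth_eq_iff_index_eq)
  moreover have "?s ` {..<m} = {..<m}"
  proof -
    have "?s ` {..<m} = (\<lambda>i. p!i) ` {..<m}" by auto
    also have "\<dots> = set p" using l by (auto simp: set_conv_nth)
    finally show ?thesis using s by simp
  qed
  ultimately show "bij_betw ?s {..<m} {..<m}" by (simp add: bij_betw_def)
  show "\<And>x. x \<notin> {..<m} \<Longrightarrow> ?s x = x" by simp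
qed

lemma perm_transfer:
  assumes pc: "perfect_colouring V E m c M" and sg: "\<sigma> permutes {..<m}"
    and eq: "\<forall>i<m. \<forall>j<m. A (\<sigma> i) (\<sigma> j) = M i j"
  shows "perfect_colouring V E m (\<sigma> \<circ> c) A"
proof -
  have img: "c ` V = {..<m}" using pc by (simp add: perfect_colouring_def is_colouring_def)
  have "(\<sigma> \<circ> c) ` V = \<sigma> ` (c ` V)" by (simp only: image_comp)
  then have "(\<sigma> \<circ> c) ` V = {..<m}" using img permutes_image[OF sg] by simp
  moreover have "card {w\<in>V. E v w \<and> (\<sigma> \<circ> c) w = j} = A i j"
    if i: "i < m" and j: "j < m" and v: "v \<in> V" and cv: "(\<sigma> \<circ> c) v = i" for i j v
  proof -
    define j' where "j' = inv \<sigma> j"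
    have j'm: "j' < m" using j permutes_in_image[OF permutes_inv[OF sg]] unfolding j'_def by simp
    have sj: "\<sigma> j' = j" unfolding j'_def using permutes_inverses[OF sg] by simp
    have cvm: "c v < m" using img v by blast
    have "{w\<in>V. E v w \<and> (\<sigma> \<circ> c) w = j} = {w\<in>V. E v w \<and> c w = j'}"
    proof -
      have "(\<sigma> (c w) = j) = (c w = j')" for w
      proof -
        have "(\<sigma> (c w) = j) = (\<sigma> (c w) = \<sigma> j')" using sj by simp
        also have "\<dots> = (c w = j')" using permutes_inj[OF sg] by (simp add: inj_eq)
        finally show ?thesis .
      qed
      then show ?thesis by simp
    qed
    then have "card {w\<in>V. E v w \<and> (\<sigma> \<circ> c) w = j} = M (c v) j'"
      using pc v cvm j'm unfolding perfect_colouring_def by simp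
    also have "\<dots> = A (\<sigma> (c v)) (\<sigma> j')" using eq cvm j'm by simp
    also have "\<dots> = A i j" using cv sj by simp
    finally show ?thesis .
  qed
  ultimately show ?thesis unfolding perfect_colouring_def is_colouring_def by blast
qed

lemma equiv_from_good:
  assumes "good m Ps Ms (Rof m A)" and Ps: "\<forall>p\<in>set Ps. distinct p \<and> set p = {..<m} \<and> length p = m"
  shows "\<exists>M\<in>set Ms. equiv_up_to_perm m A (mat_of M)"
proof -
  obtain p M where p: "p \<in> set Ps" and M: "M \<in> set Ms"
    and eq: "\<forall>i<m. \<forall>j<m. Rof m A ! (p!i) ! (p!j) = M!i!j"
    using assms(1) unfolding good_def by (auto simp: list_all_iff)
  let ?s = "(\<lambda>i. if i < m then p!i else i)"
  have pp: "distinct p" "set p = {..<m}" "length p = m" using Ps p by auto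
  have sp: "?s permutes {..<m}" by (rule list_perm_permutes[OF pp])
  have lt: "i < m \<Longrightarrow> p!i < m" for i using pp nth_mem by fastforce
  have "\<forall>i<m. \<forall>j<m. A (?s i) (?s j) = mat_of M i j"
    using eq lt by (simp add: Rof_nth mat_of_def)
  then show ?thesis using M sp unfolding equiv_up_to_perm_def by blast
qed

context
  fixes m c A
  assumes pc: "perfect_colouring Q4_V Q4_adj m c A"
begin

lemma ev_ok_R: "ev_ok m (Rof m A)"
  unfolding ev_ok_def list_all_iff sum_list_upt_map
proof (intro ballI)
  fix i j assume "i \<in> set [0..<m]" "j \<in> set [0..<m]"
  then have ij: "i < m" "j < m" by auto
  have "(\<Sum>x<m. Rof m A ! i ! x * Rof m A ! x ! j) = (\<Sum>x<m. A i x * A x j)"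
    using ij by (intro sum.cong refl) (simp add: Rof_nth)
  then show "even (\<Sum>x<m. Rof m A ! i ! x * Rof m A ! x ! j)" using parity[OF pc ij] by simp
qed

lemma conn_ok_R:
  assumes "\<forall>T\<in>set Ts. set T \<subseteq> {..<m} \<and> T \<noteq> [] \<and> (\<exists>j<m. j \<notin> set T)"
  shows "conn_ok m Ts (Rof m A)"
  unfolding conn_ok_def list_all_iff
proof
  fix T assume T: "T \<in> set Ts"
  have T1: "set T \<subseteq> {..<m}" "T \<noteq> []" "\<exists>j<m. j \<notin> set T" using assms T by auto
  obtain j where j: "j < m" "j \<notin> set T" using T1(3) by blast
  have hT: "hd T \<in> set T" using T1(2) by simp
  obtain a b where H: "a \<in> set T" "b < m" "b \<notin> set T" "A a b \<noteq> 0"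
    using conn[OF pc T1(1) hT j] by blast
  have "a < m" using H(1) T1(1) by blast
  then have R: "Rof m A ! a ! b \<noteq> 0" using H by (simp add: Rof_nth)
  have B: "b \<in> set [0..<m]" using H by simp
  show "\<exists>a\<in>set T. \<exists>b\<in>set [0..<m]. b \<notin> set T \<and> Rof m A ! a ! b \<noteq> 0"
    using H(1) B H(3) R by blast
qed

lemma sizes_ok_R:
  assumes "n \<in> set Ns" "length n = m" "\<forall>i<m. n!i = ncl c i"
  shows "sizes_ok m Ns (Rof m A)"
  unfolding sizes_ok_def list_all_iff
proof (intro bexI[of _ n] ballI)
  fix i j assume "i \<in> set [0..<m]" "j \<in> set [0..<m]"
  then have ij: "i < m" "j < m" by auto
  show "n ! i * Rof m A ! i ! j = n ! j * Rof m A ! j ! i"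
    using ij assms sizes_eq[OF pc ij] by (simp add: Rof_nth)
qed (rule assms(1))

lemma main_dir:
  assumes chk: "check m Ts Ns Ps Ms (Rof m A)"
    and Ts: "\<forall>T\<in>set Ts. set T \<subseteq> {..<m} \<and> T \<noteq> [] \<and> (\<exists>j<m. j \<notin> set T)"
    and n: "n \<in> set Ns" "length n = m" "\<forall>i<m. n!i = ncl c i"
    and Ps: "\<forall>p\<in>set Ps. distinct p \<and> set p = {..<m} \<and> length p = m"
  shows "\<exists>M\<in>set Ms. equiv_up_to_perm m A (mat_of M)"
proof -
  have "good m Ps Ms (Rof m A)"
  proof -
    have e: "ev_ok m (Rof m A)" by (rule ev_ok_R)
    have co: "conn_ok m Ts (Rof m A)" by (rule conn_ok_R[OF Ts])
    have sz: "sizes_ok m Ns (Rof m A)" by (rule sizes_ok_R[OF n])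
    show ?thesis using chk unfolding check_def by (cases "good m Ps Ms (Rof m A)") (simp_all add: e co sz)
  qed
  then show ?thesis by (rule equiv_from_good[OF _ Ps])
qed

end

definition idx :: "bool list \<Rightarrow> nat" where
  "idx v = foldr (\<lambda>b a. (if b then 1 else 0) + 2 * a) v 0"
definition col :: "nat list \<Rightarrow> bool list \<Rightarrow> nat" where
  "col tbl v = tbl ! idx v"

lemma less3: "(j::nat) < 3 \<longleftrightarrow> j = 0 \<or> j = 1 \<or> j = 2" by auto
lemma less2: "(j::nat) < 2 \<longleftrightarrow> j = 0 \<or> j = 1" by auto
lemma lessThan3: "{..<3::nat} = {0,1,2}" by (auto simp: less3)
lemma lessThan2: "{..<2::nat} = {0,1}" by (auto simp: less2)
lemma upt3: "[0..<3] = [0::nat,1,2]" by (simp add: upt_rec)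
lemma upt2: "[0..<2] = [0::nat,1]" by (simp add: upt_rec)

lemma pc_compute:
  assumes "set (map c vs) = {..<m}"
    and "list_all (\<lambda>v. list_all (\<lambda>j. length (filter (\<lambda>w. Q4_adj v w \<and> c w = j) vs) = M!(c v)!j) [0..<m]) vs"
  shows "perfect_colouring Q4_V Q4_adj m c (mat_of M)"
  unfolding perfect_colouring_def is_colouring_def V_eq
  using assms by (auto simp: card_filter_set[OF distinct_vs] list_all_iff mat_of_def)

lemma real2_0: "perfect_colouring Q4_V Q4_adj 2 (col [0,1,1,0,1,0,0,1,1,0,0,1,0,1,1,0]) (mat_of [[0,4],[4,0]])"
  by (rule pc_compute) (auto simp: vs_def adj4 col_def idx_def upt2 lessThan2)

lemma real2_1: "perfect_colouring Q4_V Q4_adj 2 (col [0,0,1,1,1,1,1,1,1,1,1,1,1,1,0,0]) (mat_of [[1,3],[1,3]])"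
  by (rule pc_compute) (auto simp: vs_def adj4 col_def idx_def upt2 lessThan2)

lemma real2_2: "perfect_colouring Q4_V Q4_adj 2 (col [0,0,1,1,1,1,0,0,1,1,0,0,0,0,1,1]) (mat_of [[1,3],[3,1]])"
  by (rule pc_compute) (auto simp: vs_def adj4 col_def idx_def upt2 lessThan2)

lemma real2_3: "perfect_colouring Q4_V Q4_adj 2 (col [0,0,0,0,1,1,1,1,1,1,1,1,0,0,0,0]) (mat_of [[2,2],[2,2]])"
  by (rule pc_compute) (auto simp: vs_def adj4 col_def idx_def upt2 lessThan2)

lemma real2_4: "perfect_colouring Q4_V Q4_adj 2 (col [0,0,0,0,0,0,0,0,1,1,1,1,1,1,1,1]) (mat_of [[3,1],[1,3]])"
  by (rule pc_compute) (auto simp: vs_def adj4 col_def idx_def upt2 lessThan2)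

lemma realize2: "L \<in> {[[0,4],[4,0]], [[1,3],[1,3]], [[1,3],[3,1]], [[2,2],[2,2]], [[3,1],[1,3]]} \<Longrightarrow> \<exists>c. perfect_colouring Q4_V Q4_adj 2 c (mat_of L)"
  using real2_0 real2_1 real2_2 real2_3 real2_4 by blast

lemma real3_0: "perfect_colouring Q4_V Q4_adj 3 (col [0,2,2,1,2,1,1,2,2,1,1,2,1,2,2,0]) (mat_of [[0,0,4],[0,0,4],[1,3,0]])"
  by (rule pc_compute) (auto simp: vs_def adj4 col_def idx_def upt3 lessThan3)

lemma real3_1: "perfect_colouring Q4_V Q4_adj 3 (col [0,2,2,0,2,1,1,2,2,1,1,2,0,2,2,0]) (mat_of [[0,0,4],[0,0,4],[2,2,0]])"
  by (rule pc_compute) (auto simp: vs_def adj4 col_def idx_def upt3 lessThan3)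

lemma real3_2: "perfect_colouring Q4_V Q4_adj 3 (col [0,1,1,0,2,2,2,2,2,2,2,2,1,0,0,1]) (mat_of [[0,2,2],[2,0,2],[1,1,2]])"
  by (rule pc_compute) (auto simp: vs_def adj4 col_def idx_def upt3 lessThan3)

lemma real3_3: "perfect_colouring Q4_V Q4_adj 3 (col [0,0,1,1,2,2,2,2,2,2,2,2,1,1,0,0]) (mat_of [[1,1,2],[1,1,2],[1,1,2]])"
  by (rule pc_compute) (auto simp: vs_def adj4 col_def idx_def upt3 lessThan3)

lemma real3_4: "perfect_colouring Q4_V Q4_adj 3 (col [0,0,0,0,2,2,2,2,2,2,2,2,1,1,1,1]) (mat_of [[2,0,2],[0,2,2],[1,1,2]])"
  by (rule pc_compute) (auto simp: vs_def adj4 col_def idx_def upt3 lessThan3)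

lemma realize3: "L \<in> {[[0,0,4],[0,0,4],[1,3,0]], [[0,0,4],[0,0,4],[2,2,0]], [[0,2,2],[2,0,2],[1,1,2]], [[1,1,2],[1,1,2],[1,1,2]], [[2,0,2],[0,2,2],[1,1,2]]} \<Longrightarrow> \<exists>c. perfect_colouring Q4_V Q4_adj 3 c (mat_of L)"
  using real3_0 real3_1 real3_2 real3_3 real3_4 by blast

lemma sum3: "(\<Sum>j<3::nat. f j) = f 0 + f 1 + (f 2 :: nat)"
  by (simp add: lessThan3)
lemma sum2: "(\<Sum>j<2::nat. f j) = f 0 + (f 1 :: nat)"
  by (simp add: lessThan2)

lemma Rof3: "Rof 3 A = [[A 0 0, A 0 1, A 0 2], [A 1 0, A 1 1, A 1 2], [A 2 0, A 2 1, A 2 2]]"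
  by (simp add: Rof_def upt3)
lemma Rof2: "Rof 2 A = [[A 0 0, A 0 1], [A 1 0, A 1 1]]"
  by (simp add: Rof_def upt2)

lemma rows3_mem: "a + b + c = 4 \<Longrightarrow> [a,b,c] \<in> set rows3"
  by (simp del: product_lists.simps add: rows3_def product_lists_set)
lemma rows2_mem: "a + b = 4 \<Longrightarrow> [a,b] \<in> set rows2"
  by (simp del: product_lists.simps add: rows2_def product_lists_set)

lemma Ns3_mem: "a \<ge> 1 \<Longrightarrow> b \<ge> 1 \<Longrightarrow> c \<ge> 1 \<Longrightarrow> a + b + c = 16 \<Longrightarrow> [a,b,c] \<in> set Ns3"
  unfolding Ns3_def by (auto intro!: bexI[of _ a] bexI[of _ b])
lemma Ns2_mem: "a \<ge> 1 \<Longrightarrow> b \<ge> 1 \<Longrightarrow> a + b = 16 \<Longrightarrow> [a,b] \<in> set Ns2"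
  unfolding Ns2_def by (auto intro!: bexI[of _ a])

lemma ex3: "(\<exists>j<3::nat. P j) \<longleftrightarrow> P 0 \<or> P 1 \<or> P 2"
proof
  assume "\<exists>j<3::nat. P j"
  then obtain j :: nat where "j < 3" "P j" by blast
  moreover have "j = 0 \<or> j = 1 \<or> j = 2" using less3[THEN iffD1, OF \<open>j < 3\<close>] .
  ultimately show "P 0 \<or> P 1 \<or> P 2" by blast
next
  assume "P 0 \<or> P 1 \<or> P 2"
  moreover have "(0::nat) < 3" "(1::nat) < 3" "(2::nat) < 3" by simp_all
  ultimately show "\<exists>j<3::nat. P j" by blast
qed
lemma ex2: "(\<exists>j<2::nat. P j) \<longleftrightarrow> P 0 \<or> P 1"
proof
  assume "\<exists>j<2::nat. P j"
  then obtain j :: nat where "j < 2" "P j" by blast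
  moreover have "j = 0 \<or> j = 1" using less2[THEN iffD1, OF \<open>j < 2\<close>] .
  ultimately show "P 0 \<or> P 1" by blast
next
  assume "P 0 \<or> P 1"
  moreover have "(0::nat) < 2" "(1::nat) < 2" by simp_all
  ultimately show "\<exists>j<2::nat. P j" by blast
qed

lemma Ts3_ok: "\<forall>T\<in>set Ts3. set T \<subseteq> {..<3} \<and> T \<noteq> [] \<and> (\<exists>j<3. j \<notin> set T)"
  by (simp add: Ts3_def ex3 lessThan3)
lemma Ts2_ok: "\<forall>T\<in>set Ts2. set T \<subseteq> {..<2} \<and> T \<noteq> [] \<and> (\<exists>j<2. j \<notin> set T)"
  by (simp add: Ts2_def ex2 lessThan2)

lemma Ps3_ok: "\<forall>p\<in>set Ps3. distinct p \<and> set p = {..<3} \<and> length p = 3"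
  by (auto simp: Ps3_def lessThan3)
lemma Ps2_ok: "\<forall>p\<in>set Ps2. distinct p \<and> set p = {..<2} \<and> length p = 2"
  by (auto simp: Ps2_def lessThan2)

lemma fwd3:
  assumes pc: "perfect_colouring Q4_V Q4_adj 3 c A"
  shows "\<exists>M\<in>set Ms3. equiv_up_to_perm 3 A (mat_of M)"
proof -
  have rs: "A i 0 + A i 1 + A i 2 = 4" if "i < 3" for i using rowsum[OF pc that] by (simp add: sum3)
  have chk: "check 3 Ts3 Ns3 Ps3 Ms3 (Rof 3 A)"
    using dec3 rows3_mem[OF rs[of 0]] rows3_mem[OF rs[of 1]] rows3_mem[OF rs[of 2]]
    unfolding Rof3 list_all_iff by simp
  have n: "[ncl c 0, ncl c 1, ncl c 2] \<in> set Ns3"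
    using sum_ncl[OF pc] ncl_pos[OF pc] by (intro Ns3_mem) (simp_all add: sum3)
  show ?thesis
    by (rule main_dir[OF pc chk Ts3_ok n _ _ Ps3_ok]) (auto simp: less3)
qed

lemma fwd2:
  assumes pc: "perfect_colouring Q4_V Q4_adj 2 c A"
  shows "\<exists>M\<in>set Ms2. equiv_up_to_perm 2 A (mat_of M)"
proof -
  have rs: "A i 0 + A i 1 = 4" if "i < 2" for i using rowsum[OF pc that] by (simp add: sum2)
  have chk: "check 2 Ts2 Ns2 Ps2 Ms2 (Rof 2 A)"
    using dec2 rows2_mem[OF rs[of 0]] rows2_mem[OF rs[of 1]]
    unfolding Rof2 list_all_iff by simp
  have n: "[ncl c 0, ncl c 1] \<in> set Ns2"
    using sum_ncl[OF pc] ncl_pos[OF pc] by (intro Ns2_mem) (simp_all add: sum2)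
  show ?thesis
    by (rule main_dir[OF pc chk Ts2_ok n _ _ Ps2_ok]) (auto simp: less2)
qed

theorem theorem5p1:
  shows "(\<forall>A. (\<exists>c. perfect_colouring Q4_V Q4_adj 2 c A) \<longleftrightarrow>
            (\<exists>M \<in> mat_of ` {[[0,4],[4,0]], [[1,3],[1,3]], [[1,3],[3,1]], [[2,2],[2,2]], [[3,1],[1,3]]}.
               equiv_up_to_perm 2 A M)) \<and>
         (\<forall>A. (\<exists>c. perfect_colouring Q4_V Q4_adj 3 c A) \<longleftrightarrow>
            (\<exists>M \<in> mat_of ` {[[0,0,4],[0,0,4],[1,3,0]], [[0,0,4],[0,0,4],[2,2,0]],
                              [[0,2,2],[2,0,2],[1,1,2]], [[1,1,2],[1,1,2],[1,1,2]],
                              [[2,0,2],[0,2,2],[1,1,2]]}.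
               equiv_up_to_perm 3 A M))"
proof (intro conjI allI iffI)
  fix A
  assume "\<exists>c. perfect_colouring Q4_V Q4_adj 2 c A"
  then obtain c where "perfect_colouring Q4_V Q4_adj 2 c A" by blast
  from fwd2[OF this] obtain M where "M \<in> set Ms2" "equiv_up_to_perm 2 A (mat_of M)" by blast
  then show "\<exists>M \<in> mat_of ` {[[0,4],[4,0]], [[1,3],[1,3]], [[1,3],[3,1]], [[2,2],[2,2]], [[3,1],[1,3]]}.
               equiv_up_to_perm 2 A M" unfolding Ms2_def by (intro bexI[of _ "mat_of M"]) auto
next
  fix A
  assume "\<exists>M \<in> mat_of ` {[[0,4],[4,0]], [[1,3],[1,3]], [[1,3],[3,1]], [[2,2],[2,2]], [[3,1],[1,3]]}.
               equiv_up_to_perm 2 A M"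
  then obtain L \<sigma> where L: "L \<in> {[[0,4],[4,0]], [[1,3],[1,3]], [[1,3],[3,1]], [[2,2],[2,2]], [[3,1],[1,3]]}"
    and s: "\<sigma> permutes {..<2}" "\<forall>i<2. \<forall>j<2. A (\<sigma> i) (\<sigma> j) = mat_of L i j"
    unfolding equiv_up_to_perm_def by blast
  obtain c where "perfect_colouring Q4_V Q4_adj 2 c (mat_of L)" using realize2[OF L] by blast
  from perm_transfer[OF this s] show "\<exists>c. perfect_colouring Q4_V Q4_adj 2 c A" by blast
next
  fix A
  assume "\<exists>c. perfect_colouring Q4_V Q4_adj 3 c A"
  then obtain c where "perfect_colouring Q4_V Q4_adj 3 c A" by blast
  from fwd3[OF this] obtain M where "M \<in> set Ms3" "equiv_up_to_perm 3 A (mat_of M)" by blast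
  then show "\<exists>M \<in> mat_of ` {[[0,0,4],[0,0,4],[1,3,0]], [[0,0,4],[0,0,4],[2,2,0]],
                              [[0,2,2],[2,0,2],[1,1,2]], [[1,1,2],[1,1,2],[1,1,2]],
                              [[2,0,2],[0,2,2],[1,1,2]]}.
               equiv_up_to_perm 3 A M" unfolding Ms3_def by (intro bexI[of _ "mat_of M"]) auto
next
  fix A
  assume "\<exists>M \<in> mat_of ` {[[0,0,4],[0,0,4],[1,3,0]], [[0,0,4],[0,0,4],[2,2,0]],
                              [[0,2,2],[2,0,2],[1,1,2]], [[1,1,2],[1,1,2],[1,1,2]],
                              [[2,0,2],[0,2,2],[1,1,2]]}.
               equiv_up_to_perm 3 A M"
  then obtain L \<sigma> where L: "L \<in> {[[0,0,4],[0,0,4],[1,3,0]], [[0,0,4],[0,0,4],[2,2,0]],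
                              [[0,2,2],[2,0,2],[1,1,2]], [[1,1,2],[1,1,2],[1,1,2]],
                              [[2,0,2],[0,2,2],[1,1,2]]}"
    and s: "\<sigma> permutes {..<3}" "\<forall>i<3. \<forall>j<3. A (\<sigma> i) (\<sigma> j) = mat_of L i j"
    unfolding equiv_up_to_perm_def by blast
  obtain c where "perfect_colouring Q4_V Q4_adj 3 c (mat_of L)" using realize3[OF L] by blast
  from perm_transfer[OF this s] show "\<exists>c. perfect_colouring Q4_V Q4_adj 3 c A" by blast
qed

end
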